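(* Let $K\ge1$, $N_1,\dots,N_K\ge1$, $\mathbb{T}=\mathbb{R}^{N_1\times\cdots\times N_K}$, let $X\in\mathbb{T}$ be a random mode-exchangeable tensor with entries in $[-1,1]$, and let $U\in\mathbb{T}$ be fixed. Let $\mathcal{F}_k=\sigma(\bar X_k)$ for $k=0,\dots,K$ and $N_0=1$. Then for any $k\in\{0,1,\dots,K-1\}$ and $\lambda\in\mathbb{R}$, \[ \mathbb{E}\left[\exp\left\{\lambda\left(\langle\bar U_{k+1},\bar X_{k+1}\rangle_{\mathbb{T}_{k+1}}-N_{k+1}\langle\bar U_k,\bar X_k\rangle_{\mathbb{T}_k}\right)\right\}\mid\mathcal{F}_k\right]\le\exp\left\{\frac{\lambda^2}{2}\prod_{l=0}^kN_l\cdot\left\|\bar U_{k+1}\times_{k+1}\mathsf{A}_{N_{k+1}}\right\|^2_{\mathbb{T}_{k+1}}\right\}. \]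
   Context: $\mathbb{T}_k=\mathbb{R}^{N_1\times\cdots\times N_k}$ ($\mathbb{T}_0=\mathbb{R}$), with inner product $\langle A,B\rangle_{\mathbb{T}_k}=\sum A_{i_1\cdots i_k}B_{i_1\cdots i_k}$ and norm $\|A\|_{\mathbb{T}_k}=\sqrt{\langle A,A\rangle_{\mathbb{T}_k}}$. For $A\in\mathbb{T}$, $\bar A_k\in\mathbb{T}_k$ has entries $(\bar A_k)_{i_1\cdots i_k}=\frac1{N_{k+1}\cdots N_K}\sum_{i_{k+1},\dots,i_K}A_{i_1\cdots i_K}$ (so $\bar A_K=A$ and $\bar A_0$ is the mean of all entries). $k$-mode product with $B\in\mathbb{R}^{M\times N_k}$: $(A\times_kB)_{i_1\cdots i_{k-1}j\cdots}=\sum_{i_k}B_{ji_k}A_{i_1\cdots i_k\cdots}$. $X$ is mode-exchangeable if $X\times_l\Pi_l\overset{d}{=}X$ for every $l$ and every $N_l\times N_l$ permutation matrix $\Pi_l$. $\mathsf{A}_n\in\mathbb{R}^{n\times n}$ is the matrix whose $i$-th row, for $i\in[n-1]$, is $(0,\dots,0,1,-\frac1{n-i},\dots,-\frac1{n-i})$ (with $i-1$ leading zeros, then $1$, then $n-i$ entries $-\frac1{n-i}$), and whose $n$-th row is zero ($\mathsf{A}_1=0$). *)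

theory Defs
  imports "HOL-Probability.Probability"
begin

text \<open>Tensors in R^{N_1 x ... x N_k} are represented as functions on index lists
  (0-based indices); the dimension vector is a list ns.\<close>

definition tidx :: "nat list \<Rightarrow> nat list set" where
  "tidx ns = {is. length is = length ns \<and> (\<forall>j<length ns. is ! j < ns ! j)}"

definition tinner :: "nat list \<Rightarrow> (nat list \<Rightarrow> real) \<Rightarrow> (nat list \<Rightarrow> real) \<Rightarrow> real" where
  "tinner ns A B = (\<Sum>i\<in>tidx ns. A i * B i)"

definition tnorm :: "nat list \<Rightarrow> (nat list \<Rightarrow> real) \<Rightarrow> real" where
  "tnorm ns A = sqrt (tinner ns A A)"

text \<open>Averaging over the trailing modes: tavg N k A is \<open>\<bar>A\<close>_k in T_k, N = [N_1,...,N_K].\<close>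
definition tavg :: "nat list \<Rightarrow> nat \<Rightarrow> (nat list \<Rightarrow> real) \<Rightarrow> (nat list \<Rightarrow> real)" where
  "tavg N k A = (\<lambda>idx. (\<Sum>j\<in>tidx (drop k N). A (idx @ j)) / real (prod_list (drop k N)))"

text \<open>Mode product A \<times>_l B, where mode l is stored at 0-based position pos = l-1,
  n = N_l is the size of that mode, and B is an (M x n) matrix as a function.\<close>
definition modeprod :: "nat \<Rightarrow> nat \<Rightarrow> (nat \<Rightarrow> nat \<Rightarrow> real) \<Rightarrow> (nat list \<Rightarrow> real) \<Rightarrow> (nat list \<Rightarrow> real)" where
  "modeprod n pos B A = (\<lambda>idx. \<Sum>i<n. B (idx ! pos) i * A (idx[pos := i]))"

definition perm_mat :: "(nat \<Rightarrow> nat) \<Rightarrow> nat \<Rightarrow> nat \<Rightarrow> real" where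
  "perm_mat p j i = (if i = p j then 1 else 0)"

definition Amat :: "nat \<Rightarrow> nat \<Rightarrow> nat \<Rightarrow> real" where
  "Amat n r c = (if r + 1 < n \<and> c < n then
       (if c = r then 1 else if r < c then - 1 / real (n - 1 - r) else 0) else 0)"

definition tensor_law :: "'a measure \<Rightarrow> nat list \<Rightarrow> ('a \<Rightarrow> nat list \<Rightarrow> real) \<Rightarrow> (nat list \<Rightarrow> real) measure" where
  "tensor_law M ns X = distr M (PiM (tidx ns) (\<lambda>_. borel)) (\<lambda>\<omega>. restrict (X \<omega>) (tidx ns))"

definition mode_exchangeable :: "'a measure \<Rightarrow> nat list \<Rightarrow> ('a \<Rightarrow> nat list \<Rightarrow> real) \<Rightarrow> bool" where
  "mode_exchangeable M N X \<longleftrightarrow>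
     (\<forall>l<length N. \<forall>p. bij_betw p {..<N ! l} {..<N ! l} \<longrightarrow>
        tensor_law M N (\<lambda>\<omega>. modeprod (N ! l) l (perm_mat p) (X \<omega>)) = tensor_law M N X)"

definition sigma_avg :: "'a measure \<Rightarrow> nat list \<Rightarrow> nat \<Rightarrow> ('a \<Rightarrow> nat list \<Rightarrow> real) \<Rightarrow> 'a measure" where
  "sigma_avg M N k X = vimage_algebra (space M)
     (\<lambda>\<omega>. restrict (tavg N k (X \<omega>)) (tidx (take k N))) (PiM (tidx (take k N)) (\<lambda>_. borel))"

end

theory Submission
  imports Defs "HOL-Combinatorics.Multiset_Permutations"
begin


lemma hoeff_fin:
  fixes z :: "'b \<Rightarrow> real"
  assumes "finite A" "A \<noteq> {}" "\<And>a. a \<in> A \<Longrightarrow> z a \<in> {lo..hi}"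
  shows "(\<Sum>a\<in>A. exp (l * (z a - (\<Sum>b\<in>A. z b) / card A))) \<le> card A * exp (l\<^sup>2 * (hi - lo)\<^sup>2 / 8)"
proof -
  have main: "(\<Sum>a\<in>A. exp (l * (z a - (\<Sum>b\<in>A. z b) / card A))) \<le> card A * exp (l\<^sup>2 * (hi - lo)\<^sup>2 / 8)"
    if pos: "l > 0" and zin: "\<And>a. a \<in> A \<Longrightarrow> z a \<in> {lo..hi}" for l :: real and z lo hi
  proof -
    let ?M = "measure_pmf (pmf_of_set A)"
    have loc: "interval_bounded_random_variable ?M z lo hi"
      apply unfold_locales
      apply simp
      using zin assms(1,2) by (auto simp: AE_measure_pmf_iff)
    let ?E = "measure_pmf.expectation (pmf_of_set A) z"
    have E: "?E = (\<Sum>b\<in>A. z b) / card A"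
      by (rule integral_pmf_of_set[OF assms(2,1)])
    have "nn_integral ?M (\<lambda>x. exp (l * (z x - ?E))) \<le> ennreal (exp (l\<^sup>2 * (hi - lo)\<^sup>2 / 8))"
      by (rule interval_bounded_random_variable.Hoeffdings_lemma_nn_integral[OF loc pos])
    moreover have "nn_integral ?M (\<lambda>x. exp (l * (z x - ?E))) = ennreal (measure_pmf.expectation (pmf_of_set A) (\<lambda>x. exp (l * (z x - ?E))))"
      by (rule nn_integral_eq_integral) (auto intro!: integrable_measure_pmf_finite simp: assms(1,2))
    moreover have "measure_pmf.expectation (pmf_of_set A) (\<lambda>x. exp (l * (z x - ?E))) = (\<Sum>a\<in>A. exp (l * (z a - ?E))) / card A"
      by (rule integral_pmf_of_set[OF assms(2,1)])
    ultimately have "(\<Sum>a\<in>A. exp (l * (z a - ?E))) / card A \<le> exp (l\<^sup>2 * (hi - lo)\<^sup>2 / 8)"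
      by simp
    moreover have "card A > 0" using assms(1,2) by (simp add: card_gt_0_iff)
    ultimately show ?thesis unfolding E by (simp add: divide_le_eq mult.commute)
  qed
  consider "l > 0" | "l = 0" | "l < 0" by linarith
  then show ?thesis
  proof cases
    case 1 then show ?thesis using main assms(3) by blast
  next
    case 2 then show ?thesis by simp
  next
    case 3
    have "(\<Sum>a\<in>A. exp ((-l) * ((-z a) - (\<Sum>b\<in>A. - z b) / card A))) \<le> card A * exp ((-l)\<^sup>2 * ((-lo) - (-hi))\<^sup>2 / 8)"
      by (rule main) (use 3 assms(3) in auto)
    moreover have "(\<Sum>b\<in>A. - z b) = - (\<Sum>b\<in>A. z b)" by (simp add: sum_negf)
    ultimately show ?thesis by (simp add: algebra_simps power2_eq_square)
  qed
qed


definition ipr :: "'i set \<Rightarrow> ('i \<Rightarrow> real) \<Rightarrow> ('i \<Rightarrow> real) \<Rightarrow> real" where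
  "ipr I c w = (\<Sum>i\<in>I. c i * w i)"
definition mv :: "('b \<Rightarrow> 'i \<Rightarrow> real) \<Rightarrow> 'b set \<Rightarrow> 'i \<Rightarrow> real" where
  "mv v A = (\<lambda>i. (\<Sum>a\<in>A. v a i) / card A)"
definition lmean :: "('i \<Rightarrow> real) list \<Rightarrow> 'i \<Rightarrow> real" where
  "lmean cs = (\<lambda>i. (\<Sum>j<length cs. (cs!j) i) / length cs)"
definition lin :: "'i set \<Rightarrow> ('b \<Rightarrow> 'i \<Rightarrow> real) \<Rightarrow> ('i \<Rightarrow> real) \<Rightarrow> ('i \<Rightarrow> real) list \<Rightarrow> 'b list \<Rightarrow> real" where
  "lin I v m cs ps = (\<Sum>j<length cs. ipr I (cs!j) (\<lambda>i. v (ps!j) i - m i))"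
fun bnd :: "'i set \<Rightarrow> ('i \<Rightarrow> real) list \<Rightarrow> real" where
  "bnd I [] = 0"
| "bnd I (c # cs) = (if cs = [] then 0 else (\<Sum>i\<in>I. (c i - lmean cs i)\<^sup>2) + bnd I cs)"

lemma bnd_nonneg: "bnd I cs \<ge> 0"
  by (induction cs) (auto intro!: sum_nonneg add_nonneg_nonneg)

lemma lin_shift:
  "lin I v m cs ps = lin I v m' cs ps + (\<Sum>i\<in>I. (\<Sum>j<length cs. (cs!j) i) * (m' i - m i))"
proof -
  have "lin I v m cs ps = (\<Sum>j<length cs. \<Sum>i\<in>I. (cs!j) i * (v (ps!j) i - m' i) + (cs!j) i * (m' i - m i))"
    unfolding lin_def ipr_def by (intro sum.cong refl) (simp add: algebra_simps)
  also have "\<dots> = lin I v m' cs ps + (\<Sum>j<length cs. \<Sum>i\<in>I. (cs!j) i * (m' i - m i))"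
    unfolding lin_def ipr_def sum.distrib by simp
  also have "(\<Sum>j<length cs. \<Sum>i\<in>I. (cs!j) i * (m' i - m i)) = (\<Sum>i\<in>I. (\<Sum>j<length cs. (cs!j) i) * (m' i - m i))"
    by (subst sum.swap) (simp add: sum_distrib_right)
  finally show ?thesis .
qed

lemma aux_alg: fixes x S w :: real assumes "x > 0"
  shows "x * (S / x - (w + S) / (x + 1)) = (w + S) / (x + 1) - w"
proof -
  have "x + 1 \<noteq> 0" "x \<noteq> 0" "x + x * x \<noteq> 0" using assms by (auto simp: add_pos_pos) (smt (verit) mult_pos_pos)
  then show ?thesis by (simp add: field_simps)
qed

lemma lin_split:
  assumes "finite A" "a \<in> A" "card A = Suc (length cs)" "cs \<noteq> []"
  shows "lin I v (mv v A) (c # cs) (a # ps) =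
    ipr I (\<lambda>i. c i - lmean cs i) (\<lambda>i. v a i - mv v A i) + lin I v (mv v (A - {a})) cs ps"
proof -
  let ?L = "length cs"
  have L: "?L > 0" using assms(4) by simp
  have "lin I v (mv v A) (c # cs) (a # ps) = ipr I c (\<lambda>i. v a i - mv v A i) + lin I v (mv v A) cs ps"
    unfolding lin_def length_Cons sum.lessThan_Suc_shift by simp
  also have "lin I v (mv v A) cs ps = lin I v (mv v (A - {a})) cs ps
      + (\<Sum>i\<in>I. (\<Sum>j<length cs. (cs!j) i) * (mv v (A - {a}) i - mv v A i))"
    by (rule lin_shift)
  also have "(\<Sum>i\<in>I. (\<Sum>j<length cs. (cs!j) i) * (mv v (A - {a}) i - mv v A i))
      = (\<Sum>i\<in>I. lmean cs i * (mv v A i - v a i))"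
  proof (intro sum.cong refl)
    fix i
    define S where "S = (\<Sum>b\<in>A - {a}. v b i)"
    have sA: "(\<Sum>b\<in>A. v b i) = v a i + S" unfolding S_def using assms(1,2) by (simp add: sum.remove)
    have cA: "card (A - {a}) = ?L" using assms by simp
    have "(\<Sum>j<length cs. (cs!j) i) = ?L * lmean cs i" unfolding lmean_def using L by simp
    moreover have "?L * (mv v (A - {a}) i - mv v A i) = mv v A i - v a i"
      unfolding mv_def sA cA assms(3) S_def[symmetric] using aux_alg[of "real ?L" S "v a i"] L
      by (simp add: add.commute)
    ultimately show "(\<Sum>j<length cs. (cs!j) i) * (mv v (A - {a}) i - mv v A i) = lmean cs i * (mv v A i - v a i)"
      by (metis mult.assoc mult.commute)
  qed
  finally show ?thesis unfolding ipr_def by (simp add: algebra_simps sum.distrib sum_subtractf)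
qed


lemma perms_sum_split:
  assumes "finite A" "A \<noteq> {}"
  shows "(\<Sum>ps\<in>permutations_of_set A. F ps) = (\<Sum>a\<in>A. \<Sum>ps\<in>permutations_of_set (A - {a}). F (a # ps))"
proof -
  have "(\<Sum>ps\<in>permutations_of_set A. F ps) = (\<Sum>a\<in>A. \<Sum>ps\<in>(\<lambda>xs. a # xs) ` permutations_of_set (A - {a}). F ps)"
    unfolding permutations_of_set_nonempty[OF assms(2)]
    by (rule sum.UNION_disjoint) (use assms(1) in auto)
  also have "\<dots> = (\<Sum>a\<in>A. \<Sum>ps\<in>permutations_of_set (A - {a}). F (a # ps))"
    by (rule sum.cong[OF refl]) (simp add: sum.reindex inj_on_def)
  finally show ?thesis .
qed

lemma ipr_bound:
  assumes "\<forall>i\<in>I. \<bar>w i\<bar> \<le> 1"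
  shows "\<bar>ipr I D w\<bar> \<le> (\<Sum>i\<in>I. \<bar>D i\<bar>)"
proof -
  have "\<bar>ipr I D w\<bar> \<le> (\<Sum>i\<in>I. \<bar>D i * w i\<bar>)" unfolding ipr_def by (rule sum_abs)
  also have "\<dots> \<le> (\<Sum>i\<in>I. \<bar>D i\<bar>)"
    using assms by (intro sum_mono) (auto simp: abs_mult intro: mult_left_le)
  finally show ?thesis .
qed

lemma core:
  assumes I: "finite I"
  shows "finite A \<Longrightarrow> card A = length cs \<Longrightarrow> (\<forall>a\<in>A. \<forall>i\<in>I. \<bar>v a i\<bar> \<le> 1) \<Longrightarrow>
    (\<Sum>ps\<in>permutations_of_set A. exp (t * lin I v (mv v A) cs ps))
      \<le> fact (card A) * exp (t\<^sup>2 / 2 * card I * bnd I cs)"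
proof (induction cs arbitrary: A)
  case Nil
  then have "A = {}" by simp
  then show ?case by (simp add: lin_def)
next
  case (Cons c cs)
  show ?case
  proof (cases "cs = []")
    case True
    with Cons.prems obtain a where A: "A = {a}" by (auto simp: card_Suc_eq)
    have P: "permutations_of_set A = {[a]}"
      unfolding A by (subst permutations_of_set_nonempty) auto
    show ?thesis unfolding P using True A by (simp add: lin_def ipr_def mv_def)
  next
    case False
    have Ane: "A \<noteq> {}" using Cons.prems by auto
    define D where "D = (\<lambda>i. c i - lmean cs i)"
    define z where "z = (\<lambda>a. ipr I D (v a))"
    define B where "B = t\<^sup>2 / 2 * card I * bnd I cs"
    define s where "s = (\<Sum>i\<in>I. \<bar>D i\<bar>)"
    have cardA: "card A = Suc (length cs)" using Cons.prems by simp
    have step: "(\<Sum>ps\<in>permutations_of_set (A - {a}). exp (t * lin I v (mv v A) (c # cs) (a # ps)))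
        \<le> exp (t * (z a - (\<Sum>b\<in>A. z b) / card A)) * (fact (length cs) * exp B)" if a: "a \<in> A" for a
    proof -
      have zz: "ipr I D (\<lambda>i. v a i - mv v A i) = z a - (\<Sum>b\<in>A. z b) / card A"
        unfolding z_def ipr_def mv_def
        by (simp add: algebra_simps sum_subtractf sum_distrib_left sum_divide_distrib[symmetric]
            flip: sum.swap[of _ A I])
      have "(\<Sum>ps\<in>permutations_of_set (A - {a}). exp (t * lin I v (mv v A) (c # cs) (a # ps)))
          = (\<Sum>ps\<in>permutations_of_set (A - {a}). exp (t * (z a - (\<Sum>b\<in>A. z b) / card A)) *
              exp (t * lin I v (mv v (A - {a})) cs ps))"
        by (intro sum.cong refl)
          (simp add: lin_split[OF Cons.prems(1) a cardA False] zz[unfolded D_def] D_def distrib_left exp_add)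
      also have "\<dots> = exp (t * (z a - (\<Sum>b\<in>A. z b) / card A)) *
              (\<Sum>ps\<in>permutations_of_set (A - {a}). exp (t * lin I v (mv v (A - {a})) cs ps))"
        by (simp add: sum_distrib_left)
      also have "\<dots> \<le> exp (t * (z a - (\<Sum>b\<in>A. z b) / card A)) * (fact (length cs) * exp B)"
      proof (rule mult_left_mono)
        have "(\<Sum>ps\<in>permutations_of_set (A - {a}). exp (t * lin I v (mv v (A - {a})) cs ps))
            \<le> fact (card (A - {a})) * exp (t\<^sup>2 / 2 * card I * bnd I cs)"
          by (rule Cons.IH) (use Cons.prems a in auto)
        then show "(\<Sum>ps\<in>permutations_of_set (A - {a}). exp (t * lin I v (mv v (A - {a})) cs ps))
            \<le> fact (length cs) * exp B"
          using cardA a Cons.prems(1) unfolding B_def by simp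
      qed simp
      finally show ?thesis .
    qed
    have "(\<Sum>ps\<in>permutations_of_set A. exp (t * lin I v (mv v A) (c # cs) ps))
        = (\<Sum>a\<in>A. \<Sum>ps\<in>permutations_of_set (A - {a}). exp (t * lin I v (mv v A) (c # cs) (a # ps)))"
      by (rule perms_sum_split[OF Cons.prems(1) Ane])
    also have "\<dots> \<le> (\<Sum>a\<in>A. exp (t * (z a - (\<Sum>b\<in>A. z b) / card A)) * (fact (length cs) * exp B))"
      by (rule sum_mono) (rule step)
    also have "\<dots> = (\<Sum>a\<in>A. exp (t * (z a - (\<Sum>b\<in>A. z b) / card A))) * (fact (length cs) * exp B)"
      by (simp add: sum_distrib_right)
    also have "\<dots> \<le> (card A * exp (t\<^sup>2 * (s - (-s))\<^sup>2 / 8)) * (fact (length cs) * exp B)"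
    proof (rule mult_right_mono)
      show "(\<Sum>a\<in>A. exp (t * (z a - (\<Sum>b\<in>A. z b) / card A))) \<le> card A * exp (t\<^sup>2 * (s - (-s))\<^sup>2 / 8)"
      proof (rule hoeff_fin[OF Cons.prems(1) Ane])
        fix a assume "a \<in> A"
        then have "\<bar>z a\<bar> \<le> s" unfolding z_def s_def using Cons.prems(3) by (intro ipr_bound) auto
        then show "z a \<in> {-s..s}" by auto
      qed
    qed simp
    also have "\<dots> \<le> (card A * exp (t\<^sup>2 / 2 * card I * (\<Sum>i\<in>I. (D i)\<^sup>2))) * (fact (length cs) * exp B)"
    proof -
      have "s\<^sup>2 \<le> (\<Sum>i\<in>I. \<bar>D i\<bar>\<^sup>2) * card I" unfolding s_def by (rule sum_squared_le_sum_of_squares)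
      then have "s\<^sup>2 * t\<^sup>2 \<le> ((\<Sum>i\<in>I. \<bar>D i\<bar>\<^sup>2) * card I) * t\<^sup>2"
        by (rule mult_right_mono) simp
      then have "t\<^sup>2 * (s - (-s))\<^sup>2 / 8 \<le> t\<^sup>2 / 2 * card I * (\<Sum>i\<in>I. (D i)\<^sup>2)"
        by (simp add: power2_eq_square algebra_simps)
      then show ?thesis by (intro mult_right_mono mult_left_mono) auto
    qed
    also have "\<dots> = fact (card A) * exp (t\<^sup>2 / 2 * card I * bnd I (c # cs))"
      using False unfolding B_def cardA D_def by (simp add: algebra_simps exp_add)
    finally show ?thesis .
  qed
qed



lemma tidx_Nil [simp]: "tidx [] = {[]}"
  by (auto simp: tidx_def)

lemma tidx_Cons: "tidx (a # ns) = (\<lambda>(j, l). j # l) ` ({..<a} \<times> tidx ns)"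
proof (intro set_eqI iffI)
  fix x assume x: "x \<in> tidx (a # ns)"
  then obtain j l where xe: "x = j # l" unfolding tidx_def by (cases x) auto
  have "(j # l) ! 0 < (a # ns) ! 0" using x xe unfolding tidx_def by blast
  then have ja: "j < a" by simp
  have "\<forall>i<length ns. l ! i < ns ! i"
  proof (intro allI impI)
    fix i assume "i < length ns"
    then have "Suc i < length (a # ns)" by simp
    with x xe have "(j # l) ! Suc i < (a # ns) ! Suc i" unfolding tidx_def by blast
    then show "l ! i < ns ! i" by simp
  qed
  moreover have "length l = length ns" using x xe unfolding tidx_def by simp
  ultimately have "l \<in> tidx ns" unfolding tidx_def by simp
  with ja xe show "x \<in> (\<lambda>(j, l). j # l) ` ({..<a} \<times> tidx ns)" by auto
next
  fix x assume "x \<in> (\<lambda>(j, l). j # l) ` ({..<a} \<times> tidx ns)"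
  then show "x \<in> tidx (a # ns)" unfolding tidx_def by (auto simp: nth_Cons split: nat.splits)
qed

lemma finite_tidx [simp]: "finite (tidx ns)"
  by (induction ns) (auto simp: tidx_Cons)

lemma tidx_length: "l \<in> tidx ns \<Longrightarrow> length l = length ns"
  by (simp add: tidx_def)

lemma sum_tidx_Cons: "(\<Sum>l\<in>tidx (a # ns). f l) = (\<Sum>j<a. \<Sum>l\<in>tidx ns. f (j # l))"
  unfolding tidx_Cons
  by (subst sum.reindex) (auto simp: inj_on_def sum.cartesian_product case_prod_unfold)

lemma sum_tidx_append: "(\<Sum>l\<in>tidx (xs @ ys). f l) = (\<Sum>i\<in>tidx xs. \<Sum>j\<in>tidx ys. f (i @ j))"
proof (induction xs arbitrary: f)
  case Nil then show ?case by simp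
next
  case (Cons a xs)
  show ?case by (simp add: sum_tidx_Cons Cons.IH)
qed

lemma sum_tidx_single: "(\<Sum>l\<in>tidx [n]. f l) = (\<Sum>j<n. f [j])"
  by (simp add: sum_tidx_Cons)

lemma card_tidx: "card (tidx ns) = prod_list ns"
proof -
  have "real (card (tidx ns)) = real (prod_list ns)"
  proof (induction ns)
    case Nil then show ?case by simp
  next
    case (Cons a ns)
    have "real (card (tidx (a # ns))) = (\<Sum>l\<in>tidx (a # ns). 1)" by simp
    also have "\<dots> = (\<Sum>j<a. \<Sum>l\<in>tidx ns. 1)" by (rule sum_tidx_Cons)
    also have "\<dots> = real a * real (card (tidx ns))" by simp
    finally show ?case using Cons.IH by simp
  qed
  then show ?thesis by linarith
qed

lemma tidx_append_mem: "i \<in> tidx xs \<Longrightarrow> j \<in> tidx ys \<Longrightarrow> i @ j \<in> tidx (xs @ ys)"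
  unfolding tidx_def by (auto simp: nth_append)

lemma tavg_Suc:
  assumes "k < length N"
  shows "tavg N k x i = (\<Sum>j<N!k. tavg N (Suc k) x (i @ [j])) / N!k"
proof -
  have d: "drop k N = N!k # drop (Suc k) N" using assms by (simp add: Cons_nth_drop_Suc)
  show ?thesis
    unfolding tavg_def d sum_tidx_Cons
    by (simp add: sum_divide_distrib[symmetric])
qed


lemma tavg_perm:
  assumes "length i = k" "k < length N" "j < N!k" "p j < N!k"
  shows "tavg N (Suc k) (modeprod (N!k) k (perm_mat p) x) (i @ [j]) = tavg N (Suc k) x (i @ [p j])"
proof -
  have "modeprod (N!k) k (perm_mat p) x (i @ [j] @ l) = x (i @ [p j] @ l)" for l
  proof -
    have "modeprod (N!k) k (perm_mat p) x (i @ [j] @ l) = (\<Sum>c<N!k. (if c = p j then x (i @ [c] @ l) else 0))"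
      unfolding modeprod_def perm_mat_def using assms(1)
      by (intro sum.cong refl) (simp add: nth_append list_update_append)
    also have "\<dots> = x (i @ [p j] @ l)" using assms(4) by simp
    finally show ?thesis .
  qed
  then show ?thesis unfolding tavg_def by simp
qed

lemma tavg_restrict:
  assumes "k \<le> length N" "i \<in> tidx (take k N)"
  shows "tavg N k (restrict x (tidx N)) i = tavg N k x i"
proof -
  have "i @ j \<in> tidx N" if "j \<in> tidx (drop k N)" for j
    using tidx_append_mem[OF assms(2) that] by simp
  then show ?thesis unfolding tavg_def by (intro arg_cong2[where f="(/)"] sum.cong) auto
qed

lemma prod_list_pos: fixes N :: "nat list" shows "\<forall>i<length N. N ! i \<ge> 1 \<Longrightarrow> prod_list (drop k N) > 0"
proof -
  assume a: "\<forall>i<length N. N ! i \<ge> 1"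
  have "0 \<notin> set (drop k N)"
  proof
    assume "0 \<in> set (drop k N)"
    then have "0 \<in> set N" using set_drop_subset by fast
    then obtain i where i: "i < length N" "N ! i = 0" unfolding in_set_conv_nth by blast
    then have "N ! i \<ge> 1" using a by blast
    then show False using i by arith
  qed
  then have "prod_list (drop k N) \<noteq> 0" by (simp add: prod_list_zero_iff)
  then show ?thesis by simp
qed

lemma tavg_bound:
  assumes "k \<le> length N" "\<forall>i<length N. N ! i \<ge> 1" "\<forall>idx\<in>tidx N. \<bar>x idx\<bar> \<le> 1" "i \<in> tidx (take k N)"
  shows "\<bar>tavg N k x i\<bar> \<le> 1"
proof -
  have P: "real (prod_list (drop k N)) > 0" using prod_list_pos[OF assms(2)] by simp
  have mem: "i @ j \<in> tidx N" if "j \<in> tidx (drop k N)" for j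
    using tidx_append_mem[OF assms(4) that] by simp
  have "\<bar>\<Sum>j\<in>tidx (drop k N). x (i @ j)\<bar> \<le> (\<Sum>j\<in>tidx (drop k N). \<bar>x (i @ j)\<bar>)" by (rule sum_abs)
  also have "\<dots> \<le> (\<Sum>j\<in>tidx (drop k N). 1)" using assms(3) mem by (intro sum_mono) auto
  also have "\<dots> = real (prod_list (drop k N))" by (simp add: card_tidx)
  finally have "\<bar>\<Sum>j\<in>tidx (drop k N). x (i @ j)\<bar> \<le> real (prod_list (drop k N))" .
  then show ?thesis unfolding tavg_def using P by (simp add: divide_le_eq)
qed

lemma tinner_Suc:
  assumes "k < length N"
  shows "tinner (take (Suc k) N) A B = (\<Sum>i\<in>tidx (take k N). \<Sum>j<N!k. A (i @ [j]) * B (i @ [j]))"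
  unfolding tinner_def take_Suc_conv_app_nth[OF assms] sum_tidx_append sum_tidx_single by simp

lemma E_form:
  assumes "k < length N" "N ! k \<ge> 1"
  shows "tinner (take (Suc k) N) (tavg N (Suc k) U) (tavg N (Suc k) x)
                 - real (N ! k) * tinner (take k N) (tavg N k U) (tavg N k x)
    = (\<Sum>i\<in>tidx (take k N). \<Sum>j<N!k. tavg N (Suc k) U (i @ [j]) *
         (tavg N (Suc k) x (i @ [j]) - (\<Sum>m<N!k. tavg N (Suc k) x (i @ [m])) / N!k))"
proof -
  let ?I = "tidx (take k N)" and ?n = "N!k"
  let ?W = "\<lambda>i j. tavg N (Suc k) U (i @ [j])" and ?Y = "\<lambda>i j. tavg N (Suc k) x (i @ [j])"
  have n: "real ?n \<noteq> 0" using assms(2) by simp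
  have "real ?n * tinner (take k N) (tavg N k U) (tavg N k x)
      = (\<Sum>i\<in>?I. real ?n * (((\<Sum>j<?n. ?W i j) / ?n) * ((\<Sum>m<?n. ?Y i m) / ?n)))"
    unfolding tinner_def tavg_Suc[OF assms(1), of U] tavg_Suc[OF assms(1), of x]
    by (simp add: sum_distrib_left)
  also have "\<dots> = (\<Sum>i\<in>?I. \<Sum>j<?n. ?W i j * ((\<Sum>m<?n. ?Y i m) / ?n))"
    using n by (intro sum.cong refl) (simp add: sum_distrib_right field_simps, simp add: sum_divide_distrib[symmetric])
  finally have 2: "real ?n * tinner (take k N) (tavg N k U) (tavg N k x) = \<dots>" .
  show ?thesis
    unfolding tinner_Suc[OF assms(1)] 2
    by (simp add: right_diff_distrib sum_subtractf)
qed


lemma lmean_upt: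
  assumes "Suc l < n"
  shows "lmean (map a [Suc l..<n]) i = (\<Sum>c\<in>{Suc l..<n}. a c i) / (n - Suc l)"
proof -
  have "(\<Sum>j<length (map a [Suc l..<n]). (map a [Suc l..<n] ! j) i) = (\<Sum>j<n - Suc l. a (Suc l + j) i)"
    by (intro sum.cong) auto
  also have "\<dots> = (\<Sum>c\<in>{Suc l..<n}. a c i)"
    by (subst sum.atLeastLessThan_shift_0) (simp add: atLeast0LessThan comp_def)
  finally show ?thesis unfolding lmean_def by simp
qed

lemma bnd_upt:
  "l \<le> n \<Longrightarrow> bnd I (map a [l..<n]) = (\<Sum>r\<in>{l..<n}. if Suc r < n then
      (\<Sum>i\<in>I. (a r i - (\<Sum>c\<in>{Suc r..<n}. a c i) / (n - Suc r))\<^sup>2) else 0)"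
proof (induction "n - l" arbitrary: l)
  case 0 then show ?case by simp
next
  case (Suc d)
  then have l: "l < n" by simp
  have u: "[l..<n] = l # [Suc l..<n]" using l by (simp add: upt_conv_Cons)
  have IH: "bnd I (map a [Suc l..<n]) = (\<Sum>r\<in>{Suc l..<n}. if Suc r < n then
      (\<Sum>i\<in>I. (a r i - (\<Sum>c\<in>{Suc r..<n}. a c i) / (n - Suc r))\<^sup>2) else 0)"
    using Suc by simp
  show ?case
  proof (cases "Suc l < n")
    case True
    show ?thesis unfolding u using True
      by (simp add: IH lmean_upt sum.atLeast_Suc_lessThan[OF l])
  next
    case False
    then have "n = Suc l" using l by simp
    then show ?thesis by simp
  qed
qed

lemma amat_sum:
  assumes "r < n"
  shows "(\<Sum>c<n. Amat n r c * w c) = (if Suc r < n then w r - (\<Sum>c\<in>{Suc r..<n}. w c) / (n - Suc r) else 0)"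
proof (cases "Suc r < n")
  case True
  have "(\<Sum>c<n. Amat n r c * w c) = (\<Sum>c<n. (if c = r then w r else 0) - (if c \<in> {Suc r..<n} then w c / (n - Suc r) else 0))"
    using True by (intro sum.cong refl) (auto simp: Amat_def of_nat_diff)
  also have "\<dots> = (\<Sum>c<n. (if c = r then w r else 0)) - (\<Sum>c<n. (if c \<in> {Suc r..<n} then w c / (n - Suc r) else 0))"
    by (rule sum_subtractf)
  also have "(\<Sum>c<n. (if c = r then w r else 0)) = w r" using assms by simp
  also have "(\<Sum>c<n. (if c \<in> {Suc r..<n} then w c / (n - Suc r) else 0)) = (\<Sum>c\<in>{..<n} \<inter> {Suc r..<n}. w c / (n - Suc r))"
    by (rule sum.inter_restrict[symmetric]) simp
  also have "{..<n} \<inter> {Suc r..<n} = {Suc r..<n}" by auto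
  finally show ?thesis using True by (simp add: sum_divide_distrib)
next
  case False
  then show ?thesis by (simp add: Amat_def)
qed

lemma tnorm_sq:
  assumes "k < length N"
  shows "(tnorm (take (Suc k) N) (modeprod (N!k) k (Amat (N!k)) W))\<^sup>2
     = (\<Sum>i\<in>tidx (take k N). \<Sum>r<N!k. (\<Sum>c<N!k. Amat (N!k) r c * W (i @ [c]))\<^sup>2)"
proof -
  have nn: "tinner (take (Suc k) N) M M \<ge> 0" for M unfolding tinner_def by (auto intro: sum_nonneg)
  have "modeprod (N!k) k (Amat (N!k)) W (i @ [r]) = (\<Sum>c<N!k. Amat (N!k) r c * W (i @ [c]))"
    if "i \<in> tidx (take k N)" for i r
  proof -
    have "length i = k" using tidx_length[OF that] assms by simp
    then show ?thesis unfolding modeprod_def by (simp add: nth_append list_update_append)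
  qed
  moreover have "(tnorm (take (Suc k) N) (modeprod (N!k) k (Amat (N!k)) W))\<^sup>2
      = tinner (take (Suc k) N) (modeprod (N!k) k (Amat (N!k)) W) (modeprod (N!k) k (Amat (N!k)) W)"
    unfolding tnorm_def by (rule real_sqrt_pow2[OF nn])
  ultimately show ?thesis unfolding tinner_Suc[OF assms]
    by (simp add: power2_eq_square)
qed

lemma bnd_tnorm:
  fixes W :: "nat list \<Rightarrow> real"
  assumes "k < length N"
  defines "cs \<equiv> map (\<lambda>j i. W (i @ [j])) [0..<N!k]"
  shows "bnd (tidx (take k N)) cs = (tnorm (take (Suc k) N) (modeprod (N!k) k (Amat (N!k)) W))\<^sup>2"
proof -
  let ?n = "N!k" and ?I = "tidx (take k N)"
  have "bnd ?I cs = (\<Sum>r\<in>{0..<?n}. if Suc r < ?n then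
      (\<Sum>i\<in>?I. (W (i @ [r]) - (\<Sum>c\<in>{Suc r..<?n}. W (i @ [c])) / (?n - Suc r))\<^sup>2) else 0)"
    unfolding cs_def by (rule bnd_upt) simp
  also have "\<dots> = (\<Sum>r<?n. \<Sum>i\<in>?I. (\<Sum>c<?n. Amat ?n r c * W (i @ [c]))\<^sup>2)"
    unfolding atLeast0LessThan by (intro sum.cong refl) (simp add: amat_sum)
  also have "\<dots> = (tnorm (take (Suc k) N) (modeprod (N!k) k (Amat (N!k)) W))\<^sup>2"
    unfolding tnorm_sq[OF assms(1)] by (rule sum.swap)
  finally show ?thesis .
qed


lemma perm_props:
  assumes "ps \<in> permutations_of_set {..<n}"
  shows "length ps = n" "bij_betw ((!) ps) {..<n} {..<n}" "\<And>j. j < n \<Longrightarrow> ps ! j < n"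
proof -
  have d: "distinct ps" and s: "set ps = {..<n}" using assms by (auto simp: permutations_of_set_def)
  show l: "length ps = n" using distinct_card[OF d] s by simp
  show "bij_betw ((!) ps) {..<n} {..<n}" by (rule bij_betw_nth[OF d]) (use l s in auto)
  show "\<And>j. j < n \<Longrightarrow> ps ! j < n" using l s nth_mem by fastforce
qed

lemma E_perm:
  fixes x U :: "nat list \<Rightarrow> real"
  assumes "k < length N" "N ! k \<ge> 1" "ps \<in> permutations_of_set {..<N!k}"
  defines "v \<equiv> (\<lambda>m i. tavg N (Suc k) x (i @ [m]))"
  defines "cs \<equiv> map (\<lambda>j i. tavg N (Suc k) U (i @ [j])) [0..<N!k]"
  shows "tinner (take (Suc k) N) (tavg N (Suc k) U) (tavg N (Suc k) (modeprod (N!k) k (perm_mat ((!) ps)) x))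
      - real (N ! k) * tinner (take k N) (tavg N k U) (tavg N k (modeprod (N!k) k (perm_mat ((!) ps)) x))
    = lin (tidx (take k N)) v (mv v {..<N!k}) cs ps"
proof -
  let ?n = "N!k" and ?I = "tidx (take k N)"
  let ?xp = "modeprod (N!k) k (perm_mat ((!) ps)) x"
  note pp = perm_props[OF assms(3)]
  have Y: "tavg N (Suc k) ?xp (i @ [j]) = v (ps ! j) i" if "i \<in> ?I" "j < ?n" for i j
  proof -
    have "length i = k" using tidx_length[OF that(1)] assms(1) by simp
    then show ?thesis unfolding v_def by (rule tavg_perm) (use assms(1) that pp in auto)
  qed
  have S: "(\<Sum>m<?n. tavg N (Suc k) ?xp (i @ [m])) = (\<Sum>m<?n. v m i)" if "i \<in> ?I" for i
  proof -
    have "(\<Sum>m<?n. tavg N (Suc k) ?xp (i @ [m])) = (\<Sum>m<?n. v (ps ! m) i)"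
      using Y[OF that] by simp
    also have "\<dots> = (\<Sum>m<?n. v m i)"
      by (rule sum.reindex_bij_betw[OF pp(2), of "\<lambda>m. v m i"])
    finally show ?thesis .
  qed
  have "tinner (take (Suc k) N) (tavg N (Suc k) U) (tavg N (Suc k) ?xp)
      - real (N ! k) * tinner (take k N) (tavg N k U) (tavg N k ?xp)
    = (\<Sum>i\<in>?I. \<Sum>j<?n. tavg N (Suc k) U (i @ [j]) * (v (ps ! j) i - (\<Sum>m<?n. v m i) / ?n))"
    unfolding E_form[OF assms(1,2)] using Y S by (intro sum.cong refl) simp
  also have "\<dots> = (\<Sum>j<?n. \<Sum>i\<in>?I. tavg N (Suc k) U (i @ [j]) * (v (ps ! j) i - (\<Sum>m<?n. v m i) / ?n))"
    by (rule sum.swap)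
  also have "\<dots> = lin ?I v (mv v {..<?n}) cs ps"
    unfolding lin_def ipr_def mv_def cs_def by (intro sum.cong) auto
  finally show ?thesis .
qed

lemma avg_bound:
  assumes "k < length N" "\<forall>i<length N. N ! i \<ge> 1" "\<forall>idx\<in>tidx N. \<bar>x idx\<bar> \<le> 1"
  shows "(\<Sum>ps\<in>permutations_of_set {..<N!k}.
      exp (t * (tinner (take (Suc k) N) (tavg N (Suc k) U) (tavg N (Suc k) (modeprod (N!k) k (perm_mat ((!) ps)) x))
      - real (N ! k) * tinner (take k N) (tavg N k U) (tavg N k (modeprod (N!k) k (perm_mat ((!) ps)) x)))))
    / fact (N!k)
    \<le> exp (t\<^sup>2 / 2 * real (prod_list (take k N))
           * (tnorm (take (Suc k) N) (modeprod (N ! k) k (Amat (N ! k)) (tavg N (Suc k) U)))\<^sup>2)"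
proof -
  let ?n = "N!k" and ?I = "tidx (take k N)"
  define v where "v = (\<lambda>m i. tavg N (Suc k) x (i @ [m]))"
  define cs where "cs = map (\<lambda>j i. tavg N (Suc k) U (i @ [j])) [0..<N!k]"
  have n1: "?n \<ge> 1" using assms(1,2) by blast
  have vb: "\<forall>a\<in>{..<?n}. \<forall>i\<in>?I. \<bar>v a i\<bar> \<le> 1"
  proof (intro ballI)
    fix a i assume a: "a \<in> {..<?n}" and i: "i \<in> ?I"
    have "[a] \<in> tidx [?n]" using a by (simp add: tidx_def)
    then have "i @ [a] \<in> tidx (take (Suc k) N)"
      using tidx_append_mem[OF i] take_Suc_conv_app_nth[OF assms(1)] by simp
    then show "\<bar>v a i\<bar> \<le> 1" unfolding v_def
      by (rule tavg_bound[rotated 3]) (use assms in auto)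
  qed
  have "(\<Sum>ps\<in>permutations_of_set {..<?n}. exp (t * lin ?I v (mv v {..<?n}) cs ps))
      \<le> fact (card {..<?n}) * exp (t\<^sup>2 / 2 * card ?I * bnd ?I cs)"
    by (rule core) (use vb in \<open>auto simp: cs_def\<close>)
  moreover have "bnd ?I cs = (tnorm (take (Suc k) N) (modeprod (N ! k) k (Amat (N ! k)) (tavg N (Suc k) U)))\<^sup>2"
    unfolding cs_def by (rule bnd_tnorm[OF assms(1)])
  moreover have "card ?I = prod_list (take k N)" by (rule card_tidx)
  moreover have "(\<Sum>ps\<in>permutations_of_set {..<?n}.
      exp (t * (tinner (take (Suc k) N) (tavg N (Suc k) U) (tavg N (Suc k) (modeprod (N!k) k (perm_mat ((!) ps)) x))
      - real (N ! k) * tinner (take k N) (tavg N k U) (tavg N k (modeprod (N!k) k (perm_mat ((!) ps)) x)))))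
     = (\<Sum>ps\<in>permutations_of_set {..<?n}. exp (t * lin ?I v (mv v {..<?n}) cs ps))"
    by (intro sum.cong refl) (simp add: E_perm[OF assms(1) n1] v_def cs_def)
  ultimately show ?thesis by (simp add: divide_le_eq mult.commute)
qed



lemma upd_mem: "idx \<in> tidx N \<Longrightarrow> k < length N \<Longrightarrow> c < N!k \<Longrightarrow> idx[k := c] \<in> tidx N"
  unfolding tidx_def by (auto simp: nth_list_update)

lemma modeprod_perm_apply:
  assumes "idx \<in> tidx N" "k < length N" "p (idx!k) < N!k"
  shows "modeprod (N!k) k (perm_mat p) x idx = x (idx[k := p (idx!k)])"
proof -
  have "modeprod (N!k) k (perm_mat p) x idx = (\<Sum>c<N!k. if c = p (idx!k) then x (idx[k := c]) else 0)"
    unfolding modeprod_def perm_mat_def by (intro sum.cong refl) simp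
  also have "\<dots> = x (idx[k := p (idx!k)])" using assms(3) by simp
  finally show ?thesis .
qed

lemma meas_tavg:
  assumes "j \<le> length N" "i \<in> tidx (take j N)"
  shows "(\<lambda>y. tavg N j y i) \<in> borel_measurable (PiM (tidx N) (\<lambda>_. borel))"
proof -
  have "l \<in> tidx (drop j N) \<Longrightarrow> i @ l \<in> tidx N" for l
    using tidx_append_mem[OF assms(2), of l "drop j N"] by simp
  then show ?thesis unfolding tavg_def
    by (intro borel_measurable_divide borel_measurable_sum measurable_component_singleton) auto
qed

lemma meas_tinner:
  assumes "j \<le> length N"
  shows "(\<lambda>y. tinner (take j N) A (tavg N j y)) \<in> borel_measurable (PiM (tidx N) (\<lambda>_. borel))"
  unfolding tinner_def
  by (intro borel_measurable_sum borel_measurable_times borel_measurable_const meas_tavg[OF assms])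

lemma meas_Tk:
  assumes "k \<le> length N"
  shows "(\<lambda>y. restrict (tavg N k y) (tidx (take k N))) \<in> measurable (PiM (tidx N) (\<lambda>_. borel)) (PiM (tidx (take k N)) (\<lambda>_. borel))"
  by (rule measurable_restrict) (rule meas_tavg[OF assms])

lemma tinner_restrict:
  assumes "j \<le> length N"
  shows "tinner (take j N) A (tavg N j (restrict y (tidx N))) = tinner (take j N) A (tavg N j y)"
  unfolding tinner_def by (intro sum.cong refl) (simp add: tavg_restrict[OF assms])

lemma Tk_restrict:
  assumes "k \<le> length N"
  shows "restrict (tavg N k (restrict y (tidx N))) (tidx (take k N)) = restrict (tavg N k y) (tidx (take k N))"
  by (intro restrict_ext) (simp add: tavg_restrict[OF assms])

lemma tavg_k_perm:
  assumes "k < length N" "bij_betw p {..<N!k} {..<N!k}" "i \<in> tidx (take k N)"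
  shows "tavg N k (modeprod (N!k) k (perm_mat p) x) i = tavg N k x i"
proof -
  have li: "length i = k" using tidx_length[OF assms(3)] assms(1) by simp
  have pj: "j < N!k \<Longrightarrow> p j < N!k" for j using assms(2) by (auto simp: bij_betw_def)
  have "(\<Sum>j<N!k. tavg N (Suc k) (modeprod (N!k) k (perm_mat p) x) (i @ [j])) = (\<Sum>j<N!k. tavg N (Suc k) x (i @ [p j]))"
    by (intro sum.cong refl) (rule tavg_perm[OF li assms(1)], auto intro: pj)
  also have "\<dots> = (\<Sum>j<N!k. tavg N (Suc k) x (i @ [j]))"
    by (rule sum.reindex_bij_betw[OF assms(2), of "\<lambda>j. tavg N (Suc k) x (i @ [j])"])
  finally show ?thesis by (simp add: tavg_Suc[OF assms(1)])
qed

lemma tinner_bound: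
  assumes "\<forall>i\<in>tidx ns. \<bar>B i\<bar> \<le> 1"
  shows "\<bar>tinner ns A B\<bar> \<le> (\<Sum>i\<in>tidx ns. \<bar>A i\<bar>)"
  using ipr_bound[OF assms, of A] unfolding ipr_def tinner_def .


theorem lemma6:
  fixes M :: "'a measure" and N :: "nat list" and X :: "'a \<Rightarrow> nat list \<Rightarrow> real"
    and U :: "nat list \<Rightarrow> real" and k :: nat and t :: real
  assumes "prob_space M"
    and "length N \<ge> 1" and "\<forall>i<length N. N ! i \<ge> 1"
    and "\<forall>idx\<in>tidx N. (\<lambda>\<omega>. X \<omega> idx) \<in> borel_measurable M"
    and "\<forall>\<omega>\<in>space M. \<forall>idx\<in>tidx N. \<bar>X \<omega> idx\<bar> \<le> 1"
    and "mode_exchangeable M N X"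
    and "k < length N"
  shows "AE \<omega> in M.
    real_cond_exp M (sigma_avg M N k X)
      (\<lambda>\<omega>. exp (t * (tinner (take (Suc k) N) (tavg N (Suc k) U) (tavg N (Suc k) (X \<omega>))
                 - real (N ! k) * tinner (take k N) (tavg N k U) (tavg N k (X \<omega>))))) \<omega>
    \<le> exp (t\<^sup>2 / 2 * real (prod_list (take k N))
           * (tnorm (take (Suc k) N) (modeprod (N ! k) k (Amat (N ! k)) (tavg N (Suc k) U)))\<^sup>2)"
proof -
  interpret prob_space M by fact
  define n where "n = N ! k"
  define D where "D = tidx N"
  define Dk where "Dk = tidx (take k N)"
  define PiD where "PiD = PiM D (\<lambda>_. borel :: real measure)"
  define PiK where "PiK = PiM Dk (\<lambda>_. borel :: real measure)"
  define Tk where "Tk = (\<lambda>y. restrict (tavg N k y) Dk)"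
  define E where "E = (\<lambda>y. tinner (take (Suc k) N) (tavg N (Suc k) U) (tavg N (Suc k) y)
                 - real n * tinner (take k N) (tavg N k U) (tavg N k y))"
  define f where "f = (\<lambda>y. exp (t * E y))"
  define Xp where "Xp = (\<lambda>ps \<omega>. modeprod n k (perm_mat ((!) ps)) (X \<omega>))"
  define PS where "PS = permutations_of_set {..<n}"
  define g where "g = (\<lambda>\<omega>. (\<Sum>ps\<in>PS. f (Xp ps \<omega>)) / fact n)"
  define G where "G = sigma_avg M N k X"
  define Bd where "Bd = exp (t\<^sup>2 / 2 * real (prod_list (take k N))
           * (tnorm (take (Suc k) N) (modeprod (N ! k) k (Amat (N ! k)) (tavg N (Suc k) U)))\<^sup>2)"
  have kN: "k < length N" by fact
  have n1: "n \<ge> 1" using assms(3) kN unfolding n_def by blast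
  have finPS: "finite PS" unfolding PS_def by simp
  have cardPS: "card PS = fact n" unfolding PS_def by simp

  have R_meas: "(\<lambda>\<omega>. restrict (X \<omega>) D) \<in> measurable M PiD"
    unfolding PiD_def by (rule measurable_restrict) (use assms(4) in \<open>auto simp: D_def\<close>)
  have Xp_apply: "Xp ps \<omega> idx = X \<omega> (idx[k := ps ! (idx!k)])" if "ps \<in> PS" "idx \<in> D" for ps \<omega> idx
  proof -
    have "idx ! k < n" using that(2) kN unfolding D_def tidx_def n_def by auto
    then have "ps ! (idx!k) < n" using perm_props(3)[of ps n] that(1) unfolding PS_def by blast
    then show ?thesis unfolding Xp_def n_def
      by (rule modeprod_perm_apply[OF that(2)[unfolded D_def] kN])
  qed
  have upd: "idx[k := ps ! (idx!k)] \<in> D" if "ps \<in> PS" "idx \<in> D" for ps idx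
  proof -
    have "idx ! k < n" using that(2) kN unfolding D_def tidx_def n_def by auto
    then have "ps ! (idx!k) < n" using perm_props(3)[of ps n] that(1) unfolding PS_def by blast
    then show ?thesis using upd_mem[of idx N k] that(2) kN unfolding D_def n_def by blast
  qed
  have Rp_meas: "(\<lambda>\<omega>. restrict (Xp ps \<omega>) D) \<in> measurable M PiD" if "ps \<in> PS" for ps
    unfolding PiD_def
  proof (rule measurable_restrict)
    fix idx assume "idx \<in> D"
    then show "(\<lambda>\<omega>. Xp ps \<omega> idx) \<in> measurable M borel"
      using Xp_apply[OF that] upd[OF that] assms(4) unfolding D_def by simp
  qed
  have Tk_meas: "Tk \<in> measurable PiD PiK"
    unfolding Tk_def PiD_def PiK_def D_def Dk_def by (rule meas_Tk) (use kN in simp)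
  have E_meas: "E \<in> borel_measurable PiD"
    unfolding E_def PiD_def D_def n_def
    by (intro borel_measurable_diff borel_measurable_times borel_measurable_const meas_tinner) (use kN in auto)
  have f_meas: "f \<in> borel_measurable PiD"
    unfolding f_def by (intro borel_measurable_exp[THEN measurable_compose_rev] borel_measurable_times borel_measurable_const E_meas)
  have Tk_res: "Tk (restrict y D) = Tk y" for y
    unfolding Tk_def D_def Dk_def by (rule Tk_restrict) (use kN in simp)
  have E_res: "E (restrict y D) = E y" for y
    unfolding E_def D_def using kN by (simp add: tinner_restrict)
  have f_res: "f (restrict y D) = f y" for y unfolding f_def E_res ..
  have Tk_perm: "Tk (Xp ps \<omega>) = Tk (X \<omega>)" if "ps \<in> PS" for ps \<omega>
  proof -
    have "bij_betw ((!) ps) {..<n} {..<n}" using perm_props(2) that unfolding PS_def by blast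
    then show ?thesis unfolding Tk_def Xp_def Dk_def n_def
      by (intro restrict_ext) (rule tavg_k_perm[OF kN])
  qed
  have TkX_meas: "(\<lambda>\<omega>. Tk (X \<omega>)) \<in> measurable M PiK"
  proof -
    have "(\<lambda>\<omega>. Tk (restrict (X \<omega>) D)) \<in> measurable M PiK"
      by (rule measurable_compose[OF R_meas Tk_meas])
    then show ?thesis unfolding Tk_res .
  qed
  have fX_meas: "(\<lambda>\<omega>. f (X \<omega>)) \<in> borel_measurable M"
  proof -
    have "(\<lambda>\<omega>. f (restrict (X \<omega>) D)) \<in> borel_measurable M"
      by (rule measurable_compose[OF R_meas f_meas])
    then show ?thesis unfolding f_res .
  qed
  have fXp_meas: "(\<lambda>\<omega>. f (Xp ps \<omega>)) \<in> borel_measurable M" if "ps \<in> PS" for ps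
  proof -
    have "(\<lambda>\<omega>. f (restrict (Xp ps \<omega>) D)) \<in> borel_measurable M"
      by (rule measurable_compose[OF Rp_meas[OF that] f_meas])
    then show ?thesis unfolding f_res .
  qed
  define C where "C = (\<Sum>i\<in>tidx (take (Suc k) N). \<bar>tavg N (Suc k) U i\<bar>) + real n * (\<Sum>i\<in>tidx (take k N). \<bar>tavg N k U i\<bar>)"
  have f_bound: "\<bar>f y\<bar> \<le> exp (\<bar>t\<bar> * C)" if yb: "\<forall>idx\<in>D. \<bar>y idx\<bar> \<le> 1" for y
  proof -
    have yb': "\<forall>idx\<in>tidx N. \<bar>y idx\<bar> \<le> 1" using yb unfolding D_def .
    have b1: "\<forall>i\<in>tidx (take (Suc k) N). \<bar>tavg N (Suc k) y i\<bar> \<le> 1"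
    proof
      fix i assume i: "i \<in> tidx (take (Suc k) N)"
      show "\<bar>tavg N (Suc k) y i\<bar> \<le> 1" by (rule tavg_bound[OF _ assms(3) yb' i]) (use kN in simp)
    qed
    have b0: "\<forall>i\<in>tidx (take k N). \<bar>tavg N k y i\<bar> \<le> 1"
    proof
      fix i assume i: "i \<in> tidx (take k N)"
      show "\<bar>tavg N k y i\<bar> \<le> 1" by (rule tavg_bound[OF _ assms(3) yb' i]) (use kN in simp)
    qed
    have e1: "\<bar>E y\<bar> \<le> \<bar>tinner (take (Suc k) N) (tavg N (Suc k) U) (tavg N (Suc k) y)\<bar>
        + \<bar>real n * tinner (take k N) (tavg N k U) (tavg N k y)\<bar>"
      unfolding E_def by (rule abs_triangle_ineq4)
    have e2: "\<bar>real n * tinner (take k N) (tavg N k U) (tavg N k y)\<bar> = real n * \<bar>tinner (take k N) (tavg N k U) (tavg N k y)\<bar>"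
      by (simp add: abs_mult)
    have e3: "\<bar>tinner (take (Suc k) N) (tavg N (Suc k) U) (tavg N (Suc k) y)\<bar>
        + real n * \<bar>tinner (take k N) (tavg N k U) (tavg N k y)\<bar> \<le> C" unfolding C_def
      by (rule add_mono[OF tinner_bound[OF b1] mult_left_mono[OF tinner_bound[OF b0]]]) simp
    have "\<bar>E y\<bar> \<le> C" using e1 e2 e3 by linarith
    have "t * E y \<le> \<bar>t * E y\<bar>" by (rule abs_ge_self)
    also have "\<dots> = \<bar>t\<bar> * \<bar>E y\<bar>" by (rule abs_mult)
    also have "\<dots> \<le> \<bar>t\<bar> * C" by (rule mult_left_mono) (use \<open>\<bar>E y\<bar> \<le> C\<close> in simp_all)
    finally have "t * E y \<le> \<bar>t\<bar> * C" .
    then show ?thesis unfolding f_def by simp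
  qed
  have Xb: "\<forall>idx\<in>D. \<bar>X \<omega> idx\<bar> \<le> 1" if "\<omega> \<in> space M" for \<omega>
    using assms(5) that unfolding D_def by blast
  have Xpb: "\<forall>idx\<in>D. \<bar>Xp ps \<omega> idx\<bar> \<le> 1" if "\<omega> \<in> space M" "ps \<in> PS" for \<omega> ps
    using Xb[OF that(1)] Xp_apply[OF that(2)] upd[OF that(2)] by simp
  have int_fX: "integrable M (\<lambda>\<omega>. f (X \<omega>))"
  proof -
    have "AE \<omega> in M. norm (f (X \<omega>)) \<le> exp (\<bar>t\<bar> * C)"
      by (rule AE_I2) (simp add: f_bound Xb)
    then show ?thesis by (rule integrable_const_bound) (rule fX_meas)
  qed
  have int_fXp: "integrable M (\<lambda>\<omega>. f (Xp ps \<omega>))" if "ps \<in> PS" for ps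
  proof -
    have "AE \<omega> in M. norm (f (Xp ps \<omega>)) \<le> exp (\<bar>t\<bar> * C)"
      by (rule AE_I2) (simp add: f_bound Xpb that)
    then show ?thesis by (rule integrable_const_bound) (rule fXp_meas[OF that])
  qed
  have int_sum: "integrable M (\<lambda>\<omega>. \<Sum>ps\<in>PS. f (Xp ps \<omega>))"
    by (rule Bochner_Integration.integrable_sum) (rule int_fXp)
  have int_g: "integrable M g"
    unfolding g_def using int_sum by simp

  have Gv: "G = vimage_algebra (space M) (\<lambda>\<omega>. Tk (X \<omega>)) PiK"
    unfolding G_def sigma_avg_def Tk_def PiK_def Dk_def ..
  have TkX_fun: "(\<lambda>\<omega>. Tk (X \<omega>)) \<in> space M \<rightarrow> space PiK"
    using TkX_meas by (rule measurable_space[THEN funcsetI])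
  have sG: "sets G = {(\<lambda>\<omega>. Tk (X \<omega>)) -` B \<inter> space M | B. B \<in> sets PiK}"
    unfolding Gv by (rule sets_vimage_algebra2[OF TkX_fun])
  have subalg: "subalgebra M G"
    unfolding subalgebra_def
  proof
    show "sets G \<subseteq> sets M" unfolding sG using TkX_meas by (auto intro: measurable_sets)
    show "space G = space M" unfolding Gv by simp
  qed
  interpret finite_measure_subalgebra M G
    by unfold_locales (fact subalg)
  \<comment> \<open>exchangeability gives equal integrals over G-sets\<close>
  have law: "distr M PiD (\<lambda>\<omega>. restrict (Xp ps \<omega>) D) = distr M PiD (\<lambda>\<omega>. restrict (X \<omega>) D)" if "ps \<in> PS" for ps
  proof -
    have "bij_betw ((!) ps) {..<n} {..<n}" using perm_props(2) that unfolding PS_def by blast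
    then have "tensor_law M N (\<lambda>\<omega>. modeprod (N!k) k (perm_mat ((!) ps)) (X \<omega>)) = tensor_law M N X"
      using assms(6) kN unfolding mode_exchangeable_def n_def by blast
    then show ?thesis unfolding tensor_law_def PiD_def D_def Xp_def n_def .
  qed
  have key: "(\<integral>\<omega>. indicator A \<omega> * f (Xp ps \<omega>) \<partial>M) = (\<integral>\<omega>. indicator A \<omega> * f (X \<omega>) \<partial>M)"
    if A: "A \<in> sets G" and ps: "ps \<in> PS" for A ps
  proof -
    obtain B where B: "B \<in> sets PiK" and AB: "A = (\<lambda>\<omega>. Tk (X \<omega>)) -` B \<inter> space M"
      using A unfolding sG by blast
    define \<phi> where "\<phi> = (\<lambda>y. indicator B (Tk y) * f y :: real)"
    have \<phi>_meas: "\<phi> \<in> borel_measurable PiD" unfolding \<phi>_def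
      by (intro borel_measurable_times f_meas measurable_compose[OF Tk_meas borel_measurable_indicator[OF B]])
    have "(\<integral>\<omega>. indicator A \<omega> * f (Xp ps \<omega>) \<partial>M) = (\<integral>\<omega>. \<phi> (restrict (Xp ps \<omega>) D) \<partial>M)"
      by (rule Bochner_Integration.integral_cong[OF refl]) (simp add: \<phi>_def AB Tk_res f_res Tk_perm[OF ps] indicator_def)
    also have "\<dots> = integral\<^sup>L (distr M PiD (\<lambda>\<omega>. restrict (Xp ps \<omega>) D)) \<phi>"
      by (rule integral_distr[OF Rp_meas[OF ps] \<phi>_meas, symmetric])
    also have "\<dots> = integral\<^sup>L (distr M PiD (\<lambda>\<omega>. restrict (X \<omega>) D)) \<phi>" unfolding law[OF ps] ..
    also have "\<dots> = (\<integral>\<omega>. \<phi> (restrict (X \<omega>) D) \<partial>M)" by (rule integral_distr[OF R_meas \<phi>_meas])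
    also have "\<dots> = (\<integral>\<omega>. indicator A \<omega> * f (X \<omega>) \<partial>M)"
      by (rule Bochner_Integration.integral_cong[OF refl]) (simp add: \<phi>_def AB Tk_res f_res indicator_def)
    finally show ?thesis .
  qed
  have F1: "(\<integral>\<omega>\<in>A. f (X \<omega>) \<partial>M) = (\<integral>\<omega>\<in>A. g \<omega> \<partial>M)" if A: "A \<in> sets G" for A
  proof -
    have AM: "A \<in> sets M" using A subalg unfolding subalgebra_def by blast
    have i1: "integrable M (\<lambda>\<omega>. indicator A \<omega> * f (Xp ps \<omega>))" if "ps \<in> PS" for ps
      using integrable_real_mult_indicator[OF AM int_fXp[OF that]] by (simp add: mult.commute)
    have "(\<integral>\<omega>\<in>A. g \<omega> \<partial>M) = (\<integral>\<omega>. (\<Sum>ps\<in>PS. indicator A \<omega> * f (Xp ps \<omega>)) / fact n \<partial>M)"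
      unfolding set_lebesgue_integral_def g_def by (simp add: sum_distrib_left)
    also have "\<dots> = (\<integral>\<omega>. (\<Sum>ps\<in>PS. indicator A \<omega> * f (Xp ps \<omega>)) \<partial>M) / fact n"
      by (rule integral_divide_zero)
    also have "\<dots> = (\<Sum>ps\<in>PS. \<integral>\<omega>. indicator A \<omega> * f (Xp ps \<omega>) \<partial>M) / fact n"
      by (subst Bochner_Integration.integral_sum) (use i1 in auto)
    also have "\<dots> = (\<Sum>ps\<in>PS. \<integral>\<omega>. indicator A \<omega> * f (X \<omega>) \<partial>M) / fact n"
      using key[OF A] by simp
    also have "\<dots> = (\<integral>\<omega>. indicator A \<omega> * f (X \<omega>) \<partial>M)" by (simp add: cardPS)
    also have "\<dots> = (\<integral>\<omega>\<in>A. f (X \<omega>) \<partial>M)" unfolding set_lebesgue_integral_def by simp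
    finally show ?thesis by simp
  qed
  let ?h = "real_cond_exp M G g"
  have F2: "AE \<omega> in M. real_cond_exp M G (\<lambda>\<omega>. f (X \<omega>)) \<omega> = ?h \<omega>"
  proof (rule real_cond_exp_charact)
    fix A assume A: "A \<in> sets G"
    show "(\<integral>\<omega>\<in>A. f (X \<omega>) \<partial>M) = (\<integral>\<omega>\<in>A. ?h \<omega> \<partial>M)"
      using F1[OF A] real_cond_exp_intA[OF int_g A] by simp
  next
    show "integrable M (\<lambda>\<omega>. f (X \<omega>))" by (rule int_fX)
  next
    show "integrable M ?h" by (rule real_cond_exp_int(1)[OF int_g])
  next
    show "?h \<in> borel_measurable G" by (rule borel_measurable_cond_exp)
  qed
  have F3: "AE \<omega> in M. ?h \<omega> \<le> Bd"
  proof (rule real_cond_exp_le_c[OF int_g])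
    show "AE \<omega> in M. g \<omega> \<le> Bd"
    proof (rule AE_I2)
      fix \<omega> assume \<omega>: "\<omega> \<in> space M"
      have X\<omega>: "\<forall>idx\<in>tidx N. \<bar>X \<omega> idx\<bar> \<le> 1" using assms(5) \<omega> by blast
      show "g \<omega> \<le> Bd"
        unfolding g_def f_def E_def Xp_def PS_def Bd_def n_def by (rule avg_bound[OF kN assms(3) X\<omega>])
    qed
  qed
  have "AE \<omega> in M. real_cond_exp M G (\<lambda>\<omega>. f (X \<omega>)) \<omega> \<le> Bd"
    using F2 F3 by eventually_elim simp
  then show ?thesis unfolding G_def Bd_def f_def E_def n_def .
qed

end
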